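(* The function $\mathcal{O}:(0,\infty)^3\to\mathbb{R}$ is locally Lipschitz continuous on $(0,\infty)^3$.
   Context: For $(b_1,b_2,\beta)\in(0,\infty)^3$, $\mathcal{O}(b_1,b_2,\beta)=\inf\Big\{\frac{\int_{\mathbb{R}^2}(|\nabla u_1|^2+|\nabla u_2|^2)dx}{\frac{b_1}{2}\int|u_1|^4dx+\frac{b_2}{2}\int|u_2|^4dx+\beta\int|u_1|^2|u_2|^2dx}: u_i\in H^1(\mathbb{R}^2),\ \|u_i\|_2=1,\ i=1,2\Big\}$. *)

theory Defs
  imports "HOL-Analysis.Analysis"
begin

definition test_fun :: "(real^2 \<Rightarrow> real) \<Rightarrow> (real^2 \<Rightarrow> real^2) \<Rightarrow> bool" where
  "test_fun \<phi> d\<phi> \<longleftrightarrow>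
     (\<forall>x. (\<phi> has_derivative (\<lambda>h. d\<phi> x \<bullet> h)) (at x)) \<and>
     continuous_on UNIV d\<phi> \<and>
     compact (closure {x. \<phi> x \<noteq> 0})"

definition weak_gradient :: "(real^2 \<Rightarrow> real) \<Rightarrow> (real^2 \<Rightarrow> real^2) \<Rightarrow> bool" where
  "weak_gradient u g \<longleftrightarrow>
     (\<forall>\<phi> d\<phi>. test_fun \<phi> d\<phi> \<longrightarrow>
        (\<forall>i. (LINT x|lborel. u x * (d\<phi> x $ i)) = - (LINT x|lborel. (g x $ i) * \<phi> x)))"

definition H1_with_grad :: "(real^2 \<Rightarrow> real) \<Rightarrow> (real^2 \<Rightarrow> real^2) \<Rightarrow> bool" where
  "H1_with_grad u g \<longleftrightarrow>
     u \<in> borel_measurable lborel \<and> integrable lborel (\<lambda>x. (u x)\<^sup>2) \<and>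
     g \<in> borel_measurable lborel \<and> integrable lborel (\<lambda>x. (norm (g x))\<^sup>2) \<and>
     weak_gradient u g"

definition Ocal :: "real \<Rightarrow> real \<Rightarrow> real \<Rightarrow> real" where
  "Ocal b1 b2 \<beta> = Inf
     { ((LINT x|lborel. (norm (g1 x))\<^sup>2) + (LINT x|lborel. (norm (g2 x))\<^sup>2)) /
       (b1 / 2 * (LINT x|lborel. (u1 x) ^ 4) + b2 / 2 * (LINT x|lborel. (u2 x) ^ 4)
        + \<beta> * (LINT x|lborel. (u1 x)\<^sup>2 * (u2 x)\<^sup>2))
     | u1 g1 u2 g2. H1_with_grad u1 g1 \<and> H1_with_grad u2 g2 \<and>
         (LINT x|lborel. (u1 x)\<^sup>2) = 1 \<and> (LINT x|lborel. (u2 x)\<^sup>2) = 1 }"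

definition locally_lipschitz_on :: "'a::metric_space set \<Rightarrow> ('a \<Rightarrow> 'b::metric_space) \<Rightarrow> bool" where
  "locally_lipschitz_on S f \<longleftrightarrow>
     (\<forall>p\<in>S. \<exists>r>0. \<exists>L. L-lipschitz_on (cball p r \<inter> S) f)"

end

theory Submission
  imports Defs
begin

lemma elem_bound:
  fixes N A B C a1 a2 a3 b1 b2 b3 m d :: real
  assumes nn: "N \<ge> 0" "A \<ge> 0" "B \<ge> 0" "C \<ge> 0"
    and m: "m > 0" "a1 \<ge> m" "a2 \<ge> m" "a3 \<ge> m" "b1 \<ge> m" "b2 \<ge> m" "b3 \<ge> m"
    and d: "\<bar>a1 - b1\<bar> \<le> d" "\<bar>a2 - b2\<bar> \<le> d" "\<bar>a3 - b3\<bar> \<le> d"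
  shows "N / (a1/2*A + a2/2*B + a3*C) \<le> (1 + d/m) * (N / (b1/2*A + b2/2*B + b3*C))"
proof -
  define Da where "Da = a1/2*A + a2/2*B + a3*C"
  define Db where "Db = b1/2*A + b2/2*B + b3*C"
  have d0: "d \<ge> 0" using d by linarith
  have k0: "1 + d/m \<ge> 0" using d0 m by simp
  have Da0: "Da \<ge> 0" using nn m unfolding Da_def by (intro add_nonneg_nonneg mult_nonneg_nonneg) auto
  have Db0: "Db \<ge> 0" using nn m unfolding Db_def by (intro add_nonneg_nonneg mult_nonneg_nonneg) auto
  have bi: "b \<le> (1 + d/m) * a" if "\<bar>a - b\<bar> \<le> d" "a \<ge> m" for a b
  proof -
    have "d*m \<le> d*a" using that d0 by (intro mult_left_mono) auto
    then have "d \<le> d/m * a" using m by (simp add: field_simps)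
    then show ?thesis using that by (simp add: algebra_simps)
  qed
  have "Db \<le> (1 + d/m) * Da"
  proof -
    have "b1/2*A \<le> ((1 + d/m) * a1)/2*A" using bi[OF d(1) m(2)] nn by (intro mult_right_mono) auto
    moreover have "b2/2*B \<le> ((1 + d/m) * a2)/2*B" using bi[OF d(2) m(3)] nn by (intro mult_right_mono) auto
    moreover have "b3*C \<le> ((1 + d/m) * a3)*C" using bi[OF d(3) m(4)] nn by (intro mult_right_mono) auto
    ultimately have "Db \<le> ((1 + d/m) * a1)/2*A + ((1 + d/m) * a2)/2*B + ((1 + d/m) * a3)*C"
      unfolding Db_def by (intro add_mono)
    also have "\<dots> = (1 + d/m) * Da" unfolding Da_def by (simp add: algebra_simps)
    finally show ?thesis .
  qed
  show ?thesis
  proof (cases "Da = 0")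
    case True
    then show ?thesis using k0 nn Db0 unfolding Da_def[symmetric] Db_def[symmetric] by simp
  next
    case False
    then have Dap: "Da > 0" using Da0 by simp
    have "Db \<noteq> 0"
    proof
      assume "Db = 0"
      have t1: "b1/2*A \<ge> 0" "b2/2*B \<ge> 0" "b3*C \<ge> 0" using nn m by auto
      with \<open>Db = 0\<close> have "b1/2*A = 0" "b2/2*B = 0" "b3*C = 0" unfolding Db_def by linarith+
      then have "A = 0" "B = 0" "C = 0" using m by auto
      then show False using False unfolding Da_def by simp
    qed
    then have Dbp: "Db > 0" using Db0 by simp
    have "N * Db \<le> N * ((1 + d/m) * Da)" using \<open>Db \<le> _\<close> nn by (intro mult_left_mono) auto
    then have "N / Da \<le> (1 + d/m) * (N / Db)" using Dap Dbp by (simp add: field_simps)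
    then show ?thesis unfolding Da_def Db_def .
  qed
qed

definition qv :: "real \<times> real \<times> real \<times> real \<Rightarrow> real \<times> real \<times> real \<Rightarrow> real" where
  "qv t x = (case t of (N,A,B,C) \<Rightarrow> case x of (b1,b2,b3) \<Rightarrow> N / (b1/2*A + b2/2*B + b3*C))"

definition FF :: "(real \<times> real \<times> real \<times> real) set \<Rightarrow> real \<times> real \<times> real \<Rightarrow> real" where
  "FF T x = Inf ((\<lambda>t. qv t x) ` T)"

definition nonnegT where "nonnegT T \<longleftrightarrow> (\<forall>(N,A,B,C)\<in>T. N \<ge> 0 \<and> A \<ge> 0 \<and> B \<ge> 0 \<and> C \<ge> 0)"

definition coordge :: "real \<Rightarrow> real \<times> real \<times> real \<Rightarrow> bool" where
  "coordge m x \<longleftrightarrow> (case x of (a1,a2,a3) \<Rightarrow> a1 \<ge> m \<and> a2 \<ge> m \<and> a3 \<ge> m)"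

lemma qv_nonneg: assumes "nonnegT T" "t \<in> T" "coordge m x" "m > 0" shows "qv t x \<ge> 0"
  using assms unfolding nonnegT_def coordge_def qv_def
  by (cases t; cases x) (auto intro!: divide_nonneg_nonneg add_nonneg_nonneg mult_nonneg_nonneg)

lemma qv_bound:
  assumes "nonnegT T" "t \<in> T" "coordge m x" "coordge m y" "m > 0"
  shows "qv t x \<le> (1 + dist x y / m) * qv t y"
proof -
  obtain N A B C where t: "t = (N,A,B,C)" by (cases t) auto
  obtain a1 a2 a3 where x: "x = (a1,a2,a3)" by (cases x) auto
  obtain b1 b2 b3 where y: "y = (b1,b2,b3)" by (cases y) auto
  have "dist a1 b1 \<le> dist x y" using dist_fst_le[of x y] x y by simp
  moreover have "dist (a2,a3) (b2,b3) \<le> dist x y" using dist_snd_le[of x y] x y by simp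
  moreover have "dist a2 b2 \<le> dist (a2,a3) (b2,b3)" using dist_fst_le[of "(a2,a3)" "(b2,b3)"] by simp
  moreover have "dist a3 b3 \<le> dist (a2,a3) (b2,b3)" using dist_snd_le[of "(a2,a3)" "(b2,b3)"] by simp
  ultimately have d: "\<bar>a1 - b1\<bar> \<le> dist x y" "\<bar>a2 - b2\<bar> \<le> dist x y" "\<bar>a3 - b3\<bar> \<le> dist x y"
    by (auto simp: dist_real_def)
  have "N \<ge> 0 \<and> A \<ge> 0 \<and> B \<ge> 0 \<and> C \<ge> 0" using assms(1,2) t unfolding nonnegT_def by auto
  moreover have "a1 \<ge> m \<and> a2 \<ge> m \<and> a3 \<ge> m \<and> b1 \<ge> m \<and> b2 \<ge> m \<and> b3 \<ge> m"
    using assms(3,4) x y unfolding coordge_def by auto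
  ultimately have "N / (a1/2*A + a2/2*B + a3*C) \<le> (1 + dist x y/m) * (N / (b1/2*A + b2/2*B + b3*C))"
    using elem_bound[of N A B C m a1 a2 a3 b1 b2 b3 "dist x y"] d assms(5) by blast
  then show ?thesis using t x y unfolding qv_def by simp
qed

lemma FF_bound:
  assumes "nonnegT T" "coordge m x" "coordge m y" "m > 0" and False: "T \<noteq> {}"
  shows "FF T x \<le> (1 + dist x y / m) * FF T y"
proof -
  let ?k = "1 + dist x y / m"
  have kp: "?k > 0" using assms by (simp add: add_pos_nonneg)
  have bx: "bdd_below ((\<lambda>t. qv t x) ` T)"
    unfolding bdd_below_def by (rule exI[of _ 0]) (use qv_nonneg[OF assms(1) _ assms(2,4)] in blast)
  have "FF T x / ?k \<le> FF T y" unfolding FF_def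
  proof (rule cINF_greatest[OF False])
    fix t assume t: "t \<in> T"
    have "Inf ((\<lambda>t. qv t x) ` T) \<le> qv t x" using bx t by (rule cINF_lower)
    also have "\<dots> \<le> ?k * qv t y" using qv_bound[OF assms(1) t assms(2,3,4)] .
    finally show "Inf ((\<lambda>t. qv t x) ` T) / ?k \<le> qv t y" using kp by (simp add: field_simps)
  qed
  then show ?thesis using kp by (simp add: field_simps)
qed

lemma FF_nonneg: assumes "nonnegT T" "coordge m x" "m > 0" "T \<noteq> {}" shows "FF T x \<ge> 0"
  unfolding FF_def using qv_nonneg[OF assms(1) _ assms(2,3)] assms(4) by (intro cINF_greatest) auto

lemma coordge_ball:
  assumes "dist x p \<le> r" "coordge (m + r) p"
  shows "coordge m x"
proof -
  obtain a1 a2 a3 where x: "x = (a1,a2,a3)" by (cases x) auto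
  obtain b1 b2 b3 where y: "p = (b1,b2,b3)" by (cases p) auto
  have "dist a1 b1 \<le> dist x p" using dist_fst_le[of x p] x y by simp
  moreover have "dist (a2,a3) (b2,b3) \<le> dist x p" using dist_snd_le[of x p] x y by simp
  moreover have "dist a2 b2 \<le> dist (a2,a3) (b2,b3)" using dist_fst_le[of "(a2,a3)" "(b2,b3)"] by simp
  moreover have "dist a3 b3 \<le> dist (a2,a3) (b2,b3)" using dist_snd_le[of "(a2,a3)" "(b2,b3)"] by simp
  ultimately show ?thesis using assms x y unfolding coordge_def by (auto simp: dist_real_def)
qed

lemma FF_loclip:
  assumes nn: "nonnegT T"
  shows "locally_lipschitz_on ({0<..} \<times> {0<..} \<times> {0<..}) (FF T)"
  unfolding locally_lipschitz_on_def
proof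
  fix p assume "p \<in> ({0<..} \<times> {0<..} \<times> {0<..} :: (real \<times> real \<times> real) set)"
  then obtain p1 p2 p3 :: real where p: "p = (p1,p2,p3)" "p1 > 0" "p2 > 0" "p3 > 0" by auto
  define m where "m = min p1 (min p2 p3) / 2"
  have m0: "m > 0" using p unfolding m_def by auto
  have cp: "coordge (m + m) p" using p unfolding coordge_def m_def by auto
  have cx: "coordge m x" if "x \<in> cball p m" for x
    using coordge_ball[of x p m m] that cp by (auto simp: dist_commute)
  show "\<exists>r>0. \<exists>L. L-lipschitz_on (cball p r \<inter> ({0<..} \<times> {0<..} \<times> {0<..})) (FF T)"
  proof (intro exI conjI)
    show "m > 0" by (rule m0)
    show "\<bar>2 * FF T p / m\<bar>-lipschitz_on (cball p m \<inter> ({0<..} \<times> {0<..} \<times> {0<..})) (FF T)"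
    proof (cases "T = {}")
      case True
      then have FE: "FF T x = Inf {}" for x unfolding FF_def by simp
      show ?thesis
      proof (rule lipschitz_onI)
        fix x y
        have "dist (FF T x) (FF T y) = 0" by (simp only: FE dist_self)
        also have "0 \<le> \<bar>2 * FF T p / m\<bar> * dist x y" by simp
        finally show "dist (FF T x) (FF T y) \<le> \<bar>2 * FF T p / m\<bar> * dist x y" .
      qed simp
    next
      case False
      have pp: "coordge m p" using cx[of p] m0 by simp
      have Fp: "FF T p \<ge> 0" using FF_nonneg[OF nn pp m0 False] .
      have U: "FF T y \<le> 2 * FF T p" if "y \<in> cball p m" for y
      proof -
        have "FF T y \<le> (1 + dist y p / m) * FF T p" using FF_bound[OF nn cx[OF that] pp m0 False] .
        also have "\<dots> \<le> 2 * FF T p"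
        proof (intro mult_right_mono Fp)
          have "dist y p \<le> m" using that by (simp add: dist_commute)
          then show "1 + dist y p / m \<le> 2" using m0 by (simp add: field_simps)
        qed
        finally show ?thesis .
      qed
      have one: "FF T x - FF T y \<le> 2 * FF T p / m * dist x y"
        if "x \<in> cball p m" "y \<in> cball p m" for x y
      proof -
        have "FF T x \<le> (1 + dist x y / m) * FF T y" using FF_bound[OF nn cx[OF that(1)] cx[OF that(2)] m0 False] .
        then have "FF T x - FF T y \<le> dist x y / m * FF T y" by (simp add: algebra_simps)
        also have "\<dots> \<le> dist x y / m * (2 * FF T p)" using U[OF that(2)] m0 by (intro mult_left_mono) auto
        finally show ?thesis by (simp add: field_simps)
      qed
      have ab: "\<bar>2 * FF T p / m\<bar> = 2 * FF T p / m" using Fp m0 by simp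
      show ?thesis unfolding ab
      proof (rule lipschitz_onI)
        fix x y assume "x \<in> cball p m \<inter> ({0<..} \<times> {0<..} \<times> {0<..})" "y \<in> cball p m \<inter> ({0<..} \<times> {0<..} \<times> {0<..})"
        then have "x \<in> cball p m" "y \<in> cball p m" by auto
        then show "dist (FF T x) (FF T y) \<le> 2 * FF T p / m * dist x y"
          using one[of x y] one[of y x] by (auto simp: dist_real_def dist_commute)
      next
        show "0 \<le> 2 * FF T p / m" using Fp m0 by simp
      qed
    qed
  qed
qed

lemma Ocal_FF:
  "Ocal b1 b2 \<beta> = FF ((\<lambda>(u1,g1,u2,g2).
      ((LINT x|lborel. (norm (g1 x))\<^sup>2) + (LINT x|lborel. (norm (g2 x))\<^sup>2),
       (LINT x|lborel. (u1 x) ^ 4), (LINT x|lborel. (u2 x) ^ 4), (LINT x|lborel. (u1 x)\<^sup>2 * (u2 x)\<^sup>2)))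
     ` {(u1,g1,u2,g2). H1_with_grad u1 g1 \<and> H1_with_grad u2 g2 \<and>
         (LINT x|lborel. (u1 x)\<^sup>2) = 1 \<and> (LINT x|lborel. (u2 x)\<^sup>2) = 1}) (b1,b2,\<beta>)"
  unfolding Ocal_def FF_def qv_def image_image
  by (rule arg_cong[where f=Inf]) (auto simp: image_def)

lemma int4_nn: "0 \<le> (LINT x|lborel. (f (x::real^2) :: real) ^ 4)"
proof (rule integral_nonneg_AE, rule AE_I2)
  fix x have "f x ^ 4 = (f x ^ 2)^2" by (simp add: power_mult[symmetric])
  then show "0 \<le> f x ^ 4" by simp
qed

lemma int22_nn: "0 \<le> (LINT x|lborel. (f (x::real^2) :: real)\<^sup>2 * (g x)\<^sup>2)"
  by (rule integral_nonneg_AE, rule AE_I2) simp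

lemma nonnegT_O:
  "nonnegT ((\<lambda>(u1,g1,u2,g2).
      ((LINT x|lborel. (norm (g1 x))\<^sup>2) + (LINT x|lborel. (norm (g2 x))\<^sup>2),
       (LINT x|lborel. (u1 x) ^ 4), (LINT x|lborel. (u2 x) ^ 4), (LINT x|lborel. (u1 x)\<^sup>2 * (u2 x)\<^sup>2)))
     ` (S :: ((real^2\<Rightarrow>real)\<times>(real^2\<Rightarrow>real^2)\<times>(real^2\<Rightarrow>real)\<times>(real^2\<Rightarrow>real^2)) set))"
  unfolding nonnegT_def
  by (auto intro!: add_nonneg_nonneg integral_nonneg_AE simp: int4_nn int22_nn)

theorem lemma2p2:
  shows "locally_lipschitz_on ({0<..} \<times> {0<..} \<times> {0<..})
           (\<lambda>(b1, b2, \<beta>). Ocal b1 b2 \<beta>)"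
proof -
  have "(\<lambda>(b1, b2, \<beta>). Ocal b1 b2 \<beta>) = FF ((\<lambda>(u1,g1,u2,g2).
      ((LINT x|lborel. (norm (g1 x))\<^sup>2) + (LINT x|lborel. (norm (g2 x))\<^sup>2),
       (LINT x|lborel. (u1 x) ^ 4), (LINT x|lborel. (u2 x) ^ 4), (LINT x|lborel. (u1 x)\<^sup>2 * (u2 x)\<^sup>2)))
     ` {(u1,g1,u2,g2). H1_with_grad u1 g1 \<and> H1_with_grad u2 g2 \<and>
         (LINT x|lborel. (u1 x)\<^sup>2) = 1 \<and> (LINT x|lborel. (u2 x)\<^sup>2) = 1})"
    by (auto simp: Ocal_FF)
  then show ?thesis using FF_loclip[OF nonnegT_O] by simp
qed

end
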